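(* Let $d\ge4$ be even, $\mathcal{C}\in(\mathbb{R}^2)^{\otimes d}$ the symmetric tensor of $x^d-3y^d$, and $\mathcal{M}=\{x^{d-2}y,x^{d-3}y^2,\dots,xy^{d-2}\}\subset(\mathbb{R}^2)^{\otimes(d-1)}$. Let $E=\{1,\dots,n\}$, $\mathcal{E}=\{n+1,\dots,2n\}$ and let $\mathcal{W}\subset(\mathbb{R}^{E\cup\mathcal{E}})^{\otimes(d-1)}$ be a finite set of tensors such that: (3) $\operatorname{Span}\mathcal{W}$ contains the $n$ clone of every tensor in $\mathcal{M}$; (4e) $\mathbb{I}(E,d)$ is the only decomposable tensor in $\mathbb{I}(E,d)\bmod\mathcal{W}_E$; (4$\epsilon$) $\mathbb{I}(\mathcal{E},d)$ is the only decomposable tensor in $\mathbb{I}(\mathcal{E},d)\bmod\mathcal{W}_{\mathcal{E}}$. Then $\operatorname{minrk}(\mathcal{C}_c\bmod\mathcal{W})<\operatorname{minsrk}(\mathcal{C}_c\bmod\mathcal{W})$, where $\mathcal{C}_c$ is the $n$ clone of $\mathcal{C}$.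
   Context: All tensors are real. Symmetric tensors correspond to forms via $\mathcal{T}\leftrightarrow\sum_k\mathcal{T}(k_1|\dots|k_m)x_{k_1}\cdots x_{k_m}$ (with $x_1=x,x_2=y$ for binary forms). Clone: for $\mathcal{U}\in(\mathbb{R}^2)^{\otimes m}$, its $n$ clone $\mathcal{U}_c\in(\mathbb{R}^{E\cup\mathcal{E}})^{\otimes m}$ has entries $\mathcal{U}_c(k_1|\dots|k_m)=\mathcal{U}(h_1|\dots|h_m)$, where $h_i=1$ if $k_i\in E$ and $h_i=2$ if $k_i\in\mathcal{E}$. For a tensor (or set of tensors) on index set $E\cup\mathcal{E}$, the subscript $E$ (resp. $\mathcal{E}$) denotes restriction of each index to $E$ (resp. $\mathcal{E}$). $\mathbb{I}(E,d)\in(\mathbb{R}^E)^{\otimes d}$ is the all-ones tensor, similarly $\mathbb{I}(\mathcal{E},d)$. For $\mathcal{C}\in(\mathbb{R}^I)^{\otimes d}$ and finite $\mathcal{W}\subset(\mathbb{R}^I)^{\otimes(d-1)}$, $\mathcal{C}\bmod\mathcal{W}$ is the set of tensors with entries $\mathcal{C}(k_1|\dots|k_d)+\sum_{j=1}^dM_j^{(k_j)}(k_1|\dots|\widehat{k_j}|\dots|k_d)$ with arbitrary $M_j^{(k_j)}\in\operatorname{Span}\mathcal{W}$ chosen independently for each $j$ and each $k_j\in I$. $\operatorname{minrk}\mathcal{A}$ is the minimal rank (number of decomposable summands $v_1\otimes\cdots\otimes v_d$) of a tensor in $\mathcal{A}$; $\operatorname{minsrk}\mathcal{A}$ is the minimal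 symmetric rank (number of summands $\lambda v^{\otimes d}$) of a symmetric tensor in $\mathcal{A}$. *)

theory Defs
  imports "HOL-Analysis.Analysis" "HOL-Library.Multiset"
begin

text \<open>A tensor of order m on an index set I is modelled as a function
  nat list \<Rightarrow> real, of which only the values on tdom I m matter
  (lists of length m with entries in I).\<close>

type_synonym tensor = "nat list \<Rightarrow> real"

definition tdom :: "nat set \<Rightarrow> nat \<Rightarrow> nat list set" where
  "tdom I m = {ks. length ks = m \<and> set ks \<subseteq> I}"

definition tspan :: "nat set \<Rightarrow> nat \<Rightarrow> tensor set \<Rightarrow> tensor set" where
  "tspan I m W = {f. \<exists>c. \<forall>ks\<in>tdom I m. f ks = (\<Sum>w\<in>W. c w * w ks)}"

definition decomposable :: "nat set \<Rightarrow> nat \<Rightarrow> tensor \<Rightarrow> bool" where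
  "decomposable I d T \<longleftrightarrow>
     (\<exists>v :: nat \<Rightarrow> nat \<Rightarrow> real. \<forall>ks\<in>tdom I d. T ks = (\<Prod>i<d. v i (ks ! i)))"

definition symmetric_tensor :: "nat set \<Rightarrow> nat \<Rightarrow> tensor \<Rightarrow> bool" where
  "symmetric_tensor I d T \<longleftrightarrow>
     (\<forall>ks\<in>tdom I d. \<forall>ks'\<in>tdom I d. mset ks = mset ks' \<longrightarrow> T ks = T ks')"

definition rank_le :: "nat set \<Rightarrow> nat \<Rightarrow> tensor \<Rightarrow> nat \<Rightarrow> bool" where
  "rank_le I d T r \<longleftrightarrow>
     (\<exists>v :: nat \<Rightarrow> nat \<Rightarrow> nat \<Rightarrow> real. \<forall>ks\<in>tdom I d.
        T ks = (\<Sum>l<r. \<Prod>i<d. v l i (ks ! i)))"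

definition srank_le :: "nat set \<Rightarrow> nat \<Rightarrow> tensor \<Rightarrow> nat \<Rightarrow> bool" where
  "srank_le I d T r \<longleftrightarrow>
     (\<exists>(lam :: nat \<Rightarrow> real) (u :: nat \<Rightarrow> nat \<Rightarrow> real). \<forall>ks\<in>tdom I d.
        T ks = (\<Sum>l<r. lam l * (\<Prod>i<d. u l (ks ! i))))"

definition minrk :: "nat set \<Rightarrow> nat \<Rightarrow> tensor set \<Rightarrow> nat" where
  "minrk I d A = (LEAST r. \<exists>T\<in>A. rank_le I d T r)"

definition minsrk :: "nat set \<Rightarrow> nat \<Rightarrow> tensor set \<Rightarrow> nat" where
  "minsrk I d A = (LEAST r. \<exists>T\<in>A. symmetric_tensor I d T \<and> srank_le I d T r)"

definition tmod :: "nat set \<Rightarrow> nat \<Rightarrow> tensor \<Rightarrow> tensor set \<Rightarrow> tensor set" where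
  "tmod I d C W = {T. \<exists>M :: nat \<Rightarrow> nat \<Rightarrow> tensor.
      (\<forall>j<d. \<forall>k\<in>I. M j k \<in> tspan I (d - 1) W) \<and>
      (\<forall>ks\<in>tdom I d. T ks = C ks +
          (\<Sum>j<d. M j (ks ! j) (take j ks @ drop (Suc j) ks)))}"

definition only_decomposable :: "nat set \<Rightarrow> nat \<Rightarrow> tensor \<Rightarrow> tensor set \<Rightarrow> bool" where
  "only_decomposable I d T A \<longleftrightarrow>
     decomposable I d T \<and> (\<exists>T'\<in>A. \<forall>ks\<in>tdom I d. T' ks = T ks) \<and>
     (\<forall>T'\<in>A. decomposable I d T' \<longrightarrow> (\<forall>ks\<in>tdom I d. T' ks = T ks))"

definition ones :: tensor where "ones = (\<lambda>_. 1)"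

text \<open>Symmetric tensor in (R^2)^{\<otimes>m} (indices 1 = x, 2 = y) of the monomial
  x^(m-j) y^j: entry 1/(m choose j) if exactly j indices equal 2.\<close>
definition bin_monomial :: "nat \<Rightarrow> nat \<Rightarrow> tensor" where
  "bin_monomial m j = (\<lambda>ks. if length (filter (\<lambda>k. k = 2) ks) = j
                            then 1 / real (m choose j) else 0)"

text \<open>n clone: indices in E = {1..n} map to 1, others (in {n+1..2n}) to 2.\<close>
definition clone :: "nat \<Rightarrow> tensor \<Rightarrow> tensor" where
  "clone n U = (\<lambda>ks. U (map (\<lambda>k. if k \<in> {1..n} then 1 else 2) ks))"

end

theory Submission
  imports Defs
begin
lemma cnt_clone: "length (filter (\<lambda>k. k = 2) (map (\<lambda>k. if k \<in> {1..n} then 1 else (2::nat)) (ks::nat list)))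
   = length (filter (\<lambda>k. k \<notin> {1..n}) ks)"
  by (induct ks) auto

lemma cnt_remove: "j < length ks \<Longrightarrow> length (filter P ks)
   = length (filter P (take j ks @ drop (Suc j) ks)) + (if P (ks!j) then 1 else 0)"
proof -
  assume "j < length ks"
  then have "ks = take j ks @ ks!j # drop (Suc j) ks" by (simp add: id_take_nth_drop)
  then have "length (filter P ks) = length (filter P (take j ks @ ks!j # drop (Suc j) ks))" by simp
  then show ?thesis by simp
qed

lemma cnt_sum: "real (length (filter P ks)) = (\<Sum>j<length ks. if P (ks!j) then 1 else 0)"
  by (induct ks) (simp_all del: sum.lessThan_Suc add: sum.lessThan_Suc_shift)

lemma cnt0: "length (filter P xs) = 0 \<longleftrightarrow> (\<forall>x\<in>set xs. \<not> P x)"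
  by (simp add: filter_empty_conv)

lemma cntlen: "length (filter P xs) = length xs \<longleftrightarrow> (\<forall>x\<in>set xs. P x)"
  by (metis filter_True length_filter_less less_irrefl)

lemma cnt_mset: "mset ks = mset ks' \<Longrightarrow> length (filter P ks) = length (filter P ks')"
  by (metis mset_filter size_mset)

lemma tspan_lincomb:
  assumes "finite A" "\<forall>i\<in>A. f i \<in> tspan I m W"
  shows "(\<lambda>ks. \<Sum>i\<in>A. a i * f i ks) \<in> tspan I m W"
proof -
  from assms(2) have "\<forall>i\<in>A. \<exists>c. \<forall>ks\<in>tdom I m. f i ks = (\<Sum>w\<in>W. c w * w ks)"
    by (simp add: tspan_def)
  then obtain cc where cc: "\<forall>i\<in>A. \<forall>ks\<in>tdom I m. f i ks = (\<Sum>w\<in>W. cc i w * w ks)"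
    by metis
  show ?thesis unfolding tspan_def
  proof (intro CollectI exI ballI)
    fix ks assume ks: "ks \<in> tdom I m"
    have "(\<Sum>i\<in>A. a i * f i ks) = (\<Sum>i\<in>A. a i * (\<Sum>w\<in>W. cc i w * w ks))"
      using cc ks by (intro sum.cong) auto
    also have "\<dots> = (\<Sum>w\<in>W. (\<Sum>i\<in>A. a i * cc i w) * w ks)"
      by (simp add: sum_distrib_left sum_distrib_right sum.swap[of _ W] mult.assoc)
    finally show "(\<Sum>i\<in>A. a i * f i ks) = (\<Sum>w\<in>W. (\<Sum>i\<in>A. a i * cc i w) * w ks)" .
  qed
qed

lemma tspan_scale: "f \<in> tspan I m W \<Longrightarrow> (\<lambda>ks. f ks / a) \<in> tspan I m W"
proof -
  assume "f \<in> tspan I m W"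
  then obtain c where c: "\<forall>ks\<in>tdom I m. f ks = (\<Sum>w\<in>W. c w * w ks)" by (auto simp: tspan_def)
  show ?thesis unfolding tspan_def
    by (rule CollectI, rule exI[of _ "\<lambda>w. c w / a"]) (simp add: c sum_divide_distrib)
qed

lemma tspan_mono: "I \<subseteq> J \<Longrightarrow> f \<in> tspan J m W \<Longrightarrow> f \<in> tspan I m W"
  unfolding tspan_def tdom_def by blast

lemma prod_first: "0 < (d::nat) \<Longrightarrow> (\<Prod>i<d. (if i = 0 then c else 1) * f i) = (c::real) * (\<Prod>i<d. f i)"
  proof -
  assume "0 < d"
  have "(\<Prod>i<d. (if i = 0 then c else 1)) = c" 
  proof -
    obtain e where "d = Suc e" using \<open>0 < d\<close> gr0_conv_Suc by blast
    then show ?thesis by (simp only: prod.lessThan_Suc_shift) simp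
  qed
  then show ?thesis by (simp add: prod.distrib)
qed

lemma prod_ind: "finite A \<Longrightarrow> (\<Prod>i\<in>A. if P i then 1 else 0 :: real) = (if \<forall>i\<in>A. P i then 1 else 0)"
  by (induct A rule: finite_induct) auto

theorem proposition4p5:
  fixes d n :: nat and W :: "tensor set"
  defines "E \<equiv> {1..n}" and "\<E> \<equiv> {n+1..2*n}"
  defines "C \<equiv> (\<lambda>ks. bin_monomial d 0 ks - 3 * bin_monomial d d ks)"
  assumes "even d" and "d \<ge> 4" and "n \<ge> 1"
    and "finite W"
    and h3: "\<forall>j\<in>{1..d-2}. clone n (bin_monomial (d-1) j) \<in> tspan (E \<union> \<E>) (d-1) W"
    and h4e: "only_decomposable E d ones (tmod E d ones W)"
    and h4eps: "only_decomposable \<E> d ones (tmod \<E> d ones W)"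
  shows "minrk (E \<union> \<E>) d (tmod (E \<union> \<E>) d (clone n C) W)
       < minsrk (E \<union> \<E>) d (tmod (E \<union> \<E>) d (clone n C) W)"
proof -
  let ?Q = "\<lambda>k::nat. k \<notin> {1..n}"
  let ?A = "tmod (E \<union> \<E>) d (clone n C) W"
  have d0: "0 < d" using \<open>d \<ge> 4\<close> by simp
  obtain e where de: "d = Suc e" using d0 gr0_conv_Suc by blast
  have e3: "e \<ge> 3" using \<open>d \<ge> 4\<close> de by simp
  have Cval: "\<And>ks. clone n C ks = (if length (filter ?Q ks) = 0 then 1 else 0)
                 - 3 * (if length (filter ?Q ks) = d then 1 else 0)"
    unfolding C_def clone_def bin_monomial_def cnt_clone by simp
  have inE: "\<And>k. (k \<in> E) = (\<not> ?Q k)" by (simp add: E_def)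
  define G :: "bool \<Rightarrow> bool \<Rightarrow> nat \<Rightarrow> real" where
    "G z b c = (if z then (if b then (if c = 1 then 1 + 3 * real (d-2) / real (d-1) else 0)
       else (if 1 \<le> c \<and> c \<le> d-2 then -3 - real c / real (c+1) else 0))
      else (if b then (if c = 1 then -3 / real (d-1) else 0)
       else (if 1 \<le> c \<and> c \<le> d-2 then 1 / real (c+1) else 0)))" for z b c
  have Gout: "\<And>z b c. c \<notin> {1..d-2} \<Longrightarrow> G z b c = 0" using \<open>d \<ge> 4\<close> by (auto simp: G_def)
  define MM :: "nat \<Rightarrow> nat \<Rightarrow> tensor" where
    "MM j k = (\<lambda>rest. \<Sum>i\<in>{1..d-2}. (G (j=0) (k\<in>E) i * real ((d-1) choose i))
                 * clone n (bin_monomial (d-1) i) rest)" for j k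
  have MMspan: "\<forall>j<d. \<forall>k\<in>E\<union>\<E>. MM j k \<in> tspan (E\<union>\<E>) (d-1) W"
    unfolding MM_def using h3 by (intro allI impI ballI tspan_lincomb) auto
  have binpos: "\<And>i. i \<in> {1..d-2} \<Longrightarrow> real ((d-1) choose i) \<noteq> 0" by auto
  have MMval: "MM j k rest = G (j=0) (k\<in>E) (length (filter ?Q rest))" for j k rest
  proof -
    let ?c = "length (filter ?Q rest)"
    have "MM j k rest = (\<Sum>i\<in>{1..d-2}. if i = ?c then G (j=0) (k\<in>E) i else 0)"
      unfolding MM_def clone_def bin_monomial_def cnt_clone
      by (intro sum.cong refl) (auto simp: binpos)
    also have "\<dots> = G (j=0) (k\<in>E) ?c" using Gout by auto
    finally show ?thesis .
  qed
  define V :: tensor where "V ks = (\<Prod>i<d. (if i = 0 \<and> ks!i \<notin> E then -3 else 1))" for ks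
  have Vval: "V ks = (if ks!0 \<notin> E then -3 else 1)" for ks
    unfolding V_def de by (simp only: prod.lessThan_Suc_shift) simp
  have Vin: "V \<in> ?A"
    unfolding tmod_def
  proof (rule CollectI, rule exI[of _ MM], intro conjI)
    show "\<forall>j<d. \<forall>k\<in>E\<union>\<E>. MM j k \<in> tspan (E\<union>\<E>) (d-1) W" by (rule MMspan)
    show "\<forall>ks\<in>tdom (E \<union> \<E>) d. V ks = clone n C ks + (\<Sum>j<d. MM j (ks ! j) (take j ks @ drop (Suc j) ks))"
    proof
      fix ks assume ks: "ks \<in> tdom (E \<union> \<E>) d"
      hence len: "length ks = d" by (simp add: tdom_def)
      define N where "N = length (filter ?Q ks)"
      define u where "u j = (if ?Q (ks!j) then 1 else 0::nat)" for j
      define K where "K = (\<Sum>j<e. if ?Q (ks!Suc j) then 1 else 0::real)"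
      have rest: "length (filter ?Q (take j ks @ drop (Suc j) ks)) = N - u j" if "j < d" for j
        using cnt_remove[of j ks ?Q] len that by (simp add: N_def u_def)
      have "(\<Sum>j<d. MM j (ks ! j) (take j ks @ drop (Suc j) ks)) = (\<Sum>j<d. G (j=0) (ks!j \<in> E) (N - u j))"
        using rest by (intro sum.cong refl) (simp add: MMval)
      also have "\<dots> = G True (ks!0 \<in> E) (N - u 0) + (\<Sum>j<e. G False (ks!Suc j \<in> E) (N - u (Suc j)))"
        unfolding de by (simp only: sum.lessThan_Suc_shift) simp
      also have "(\<Sum>j<e. G False (ks!Suc j \<in> E) (N - u (Suc j)))
          = (\<Sum>j<e. G False True N + (if ?Q (ks!Suc j) then 1 else 0) * (G False False (N-1) - G False True N))"
        by (intro sum.cong refl) (auto simp: u_def E_def)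
      also have "\<dots> = real e * G False True N + K * (G False False (N-1) - G False True N)"
        by (simp add: K_def sum.distrib sum_distrib_right)
      finally have S: "(\<Sum>j<d. MM j (ks ! j) (take j ks @ drop (Suc j) ks))
          = G True (ks!0 \<in> E) (N - u 0) + (real e * G False True N + K * (G False False (N-1) - G False True N))" .
      have NK: "real N = (if ?Q (ks!0) then 1 else 0) + K"
        using cnt_sum[of ?Q ks] len de unfolding N_def K_def
        by (simp del: sum.lessThan_Suc add: sum.lessThan_Suc_shift)
      have CV: "clone n C ks = (if N = 0 then 1 else 0) - 3*(if N = d then 1 else 0)"
        by (simp add: Cval N_def)
      have k0: "ks!0 \<in> set ks" using len d0 by simp
      have N0: "\<not> ?Q (ks!0)" if "N = 0" using that k0 cnt0[of ?Q ks] unfolding N_def by blast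
      have Nd: "?Q (ks!0)" if "N = d" using that k0 cntlen[of ?Q ks] len unfolding N_def by metis
      have Nle: "N \<le> d" using len length_filter_le[of ?Q ks] unfolding N_def by simp
      show "V ks = clone n C ks + (\<Sum>j<d. MM j (ks ! j) (take j ks @ drop (Suc j) ks))"
      proof (cases "?Q (ks!0)")
        case True
        have u0: "u 0 = 1" using True by (simp add: u_def)
        have KN: "K = real N - 1" using NK True by simp
        have "N \<noteq> 0" using N0 True by blast
        then consider "N = 1" | "2 \<le> N" "N < d" | "N = d" using Nle by linarith
        then show ?thesis
        proof cases
          case 1
          then show ?thesis using True e3 
            unfolding Vval CV S by (simp add: u0 KN inE de G_def field_simps)
        next
          case 2
          then show ?thesis using True e3 
            unfolding Vval CV S by (simp add: u0 KN inE de G_def field_simps of_nat_diff; arith)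
        next
          case 3
          then show ?thesis using True e3 
            unfolding Vval CV S by (simp add: u0 KN inE de G_def field_simps)
        qed
      next
        case False
        have u0: "u 0 = 0" using False by (simp add: u_def)
        have KN: "K = real N" using NK False by simp
        have "N \<noteq> d" using Nd False by blast
        then consider "N = 0" | "N = 1" | "2 \<le> N" "N < d" using Nle by linarith
        then show ?thesis
        proof cases
          case 1
          then show ?thesis using False e3 
            unfolding Vval CV S by (simp add: u0 KN inE de G_def field_simps)
        next
          case 2
          then show ?thesis using False e3 
            unfolding Vval CV S by (simp add: u0 KN inE de G_def field_simps)
        next
          case 3
          then show ?thesis using False e3 
            unfolding Vval CV S by (simp add: u0 KN inE de G_def field_simps of_nat_diff; arith)
        qed
      qed
    qed
  qed
  have rkV: "rank_le (E \<union> \<E>) d V 1"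
    unfolding rank_le_def
    by (rule exI[of _ "\<lambda>l i k. if i = 0 \<and> k \<notin> E then -3 else 1"]) (simp add: V_def)
  have up: "minrk (E \<union> \<E>) d ?A \<le> 1"
    unfolding minrk_def by (rule Least_le) (use Vin rkV in blast)
  have P2: "\<exists>T\<in>?A. symmetric_tensor (E \<union> \<E>) d T \<and> srank_le (E \<union> \<E>) d T 2"
  proof (rule bexI[of _ "clone n C"], intro conjI)
    show "clone n C \<in> ?A" unfolding tmod_def
      by (rule CollectI, rule exI[of _ "\<lambda>_ _ _. 0"]) (auto simp: tspan_def intro!: exI[of _ "\<lambda>_. 0"])
    show "symmetric_tensor (E \<union> \<E>) d (clone n C)" unfolding symmetric_tensor_def
    proof (intro ballI impI)
      fix ks ks' :: "nat list" assume "mset ks = mset ks'"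
      then have "length (filter ?Q ks) = length (filter ?Q ks')" by (rule cnt_mset)
      then show "clone n C ks = clone n C ks'" by (simp add: Cval)
    qed
    show "srank_le (E \<union> \<E>) d (clone n C) 2" unfolding srank_le_def
    proof (rule exI[of _ "\<lambda>l. if l = 0 then 1 else -3"],
        rule exI[of _ "\<lambda>l k. if l = 0 then (if k \<in> E then 1 else 0) else (if k \<notin> E then 1 else 0)"],
        rule ballI)
      fix ks assume ks: "ks \<in> tdom (E \<union> \<E>) d"
      hence len: "length ks = d" by (simp add: tdom_def)
      have p1: "(\<Prod>i<d. if ks!i \<in> E then 1 else 0::real) = (if length (filter ?Q ks) = 0 then 1 else 0)"
      proof -
        have a0: "(\<forall>i<d. ks!i \<in> E) = (length (filter ?Q ks) = 0)"
          unfolding cnt0 all_set_conv_all_nth using len by (simp add: inE)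
        have a1: "(\<forall>i\<in>{..<d}. ks!i \<in> E) = (length (filter ?Q ks) = 0)"
          using a0 by (simp only: lessThan_iff Ball_def)
        show ?thesis by (subst prod_ind[OF finite_lessThan]) (simp only: a1)
      qed
      have p2: "(\<Prod>i<d. if ks!i \<notin> E then 1 else 0::real) = (if length (filter ?Q ks) = d then 1 else 0)"
      proof -
        have a0: "(\<forall>i<d. ks!i \<notin> E) = (length (filter ?Q ks) = d)"
          using cntlen[of ?Q ks] len unfolding all_set_conv_all_nth by (simp add: inE)
        have a1: "(\<forall>i\<in>{..<d}. ks!i \<notin> E) = (length (filter ?Q ks) = d)"
          using a0 by (simp only: lessThan_iff Ball_def)
        show ?thesis by (subst prod_ind[OF finite_lessThan]) (simp only: a1)
      qed
      show "clone n C ks = (\<Sum>l<(2::nat). (if l = 0 then 1 else -3) *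
          (\<Prod>i<d. (if l = 0 then (if ks!i \<in> E then 1 else 0) else (if ks!i \<notin> E then 1 else 0))))"
        unfolding numeral_2_eq_2 using p1 p2 by (simp add: Cval)
    qed
  qed
  have tdE: "tdom E d \<subseteq> tdom (E \<union> \<E>) d" and tdEps: "tdom \<E> d \<subseteq> tdom (E \<union> \<E>) d"
    by (auto simp: tdom_def)
  have noP: "False" if rle: "r \<le> 1" and TA: "T \<in> ?A" and sr: "srank_le (E \<union> \<E>) d T r" for r T
  proof -
    obtain M where Msp: "\<forall>j<d. \<forall>k\<in>E\<union>\<E>. M j k \<in> tspan (E\<union>\<E>) (d-1) W"
      and Meq: "\<forall>ks\<in>tdom (E\<union>\<E>) d. T ks = clone n C ks + (\<Sum>j<d. M j (ks!j) (take j ks @ drop (Suc j) ks))"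
      using TA unfolding tmod_def by blast
    obtain lam u where Tr: "\<forall>ks\<in>tdom (E\<union>\<E>) d. T ks = (\<Sum>l<r. lam l * (\<Prod>i<d. u l (ks!i)))"
      using sr unfolding srank_le_def by blast
    define c where "c = (if r = 0 then 0 else lam 0)"
    have Tf: "T ks = c * (\<Prod>i<d. u 0 (ks!i))" if "ks \<in> tdom (E\<union>\<E>) d" for ks
    proof (cases "r = 0")
      case True then show ?thesis using Tr that by (simp add: c_def)
    next
      case False then have "r = 1" using \<open>r \<le> 1\<close> by simp
      then show ?thesis using Tr that by (simp add: c_def)
    qed
    have decomp: "decomposable I d (\<lambda>ks. T ks / a)" if "tdom I d \<subseteq> tdom (E\<union>\<E>) d" for I a
      unfolding decomposable_def
      by (rule exI[of _ "\<lambda>i k. (if i = 0 then c / a else 1) * u 0 k"]) (use that d0 Tf in \<open>auto simp: prod_first\<close>)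
    have decE: "decomposable E d T" using decomp[of E 1] tdE by simp
    have TE: "T \<in> tmod E d ones W"
      unfolding tmod_def
    proof (rule CollectI, rule exI[of _ M], intro conjI ballI allI impI)
      fix j k assume "j<d" "k\<in>E" then show "M j k \<in> tspan E (d-1) W"
        using Msp tspan_mono[of E "E\<union>\<E>"] by blast
    next
      fix ks assume ks: "ks \<in> tdom E d"
      have "length (filter ?Q ks) = 0" using ks unfolding cnt0 by (auto simp: tdom_def E_def)
      then have "clone n C ks = 1" using d0 by (simp add: Cval)
      then show "T ks = ones ks + (\<Sum>j<d. M j (ks!j) (take j ks @ drop (Suc j) ks))"
        using Meq ks tdE by (auto simp: ones_def)
    qed
    have T1: "\<forall>ks\<in>tdom E d. T ks = 1" using h4e TE decE unfolding only_decomposable_def ones_def by blast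
    define T' where "T' ks = T ks / (-3)" for ks
    have TEps: "T' \<in> tmod \<E> d ones W"
      unfolding tmod_def
    proof (rule CollectI, rule exI[of _ "\<lambda>j k ks. M j k ks / (-3)"], intro conjI ballI allI impI)
      fix j k assume "j<d" "k\<in>\<E>" then show "(\<lambda>ks. M j k ks / (-3)) \<in> tspan \<E> (d-1) W"
        using Msp tspan_mono[of \<E> "E\<union>\<E>"] tspan_scale by blast
    next
      fix ks assume ks: "ks \<in> tdom \<E> d"
      have "length (filter ?Q ks) = d" using ks cntlen[of ?Q ks] by (auto simp: tdom_def \<E>_def)
      then have "clone n C ks = -3" using d0 by (simp add: Cval)
      then show "T' ks = ones ks + (\<Sum>j<d. M j (ks!j) (take j ks @ drop (Suc j) ks) / (-3))"
      proof -
        have "T ks = -3 + (\<Sum>j<d. M j (ks!j) (take j ks @ drop (Suc j) ks))"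
          using Meq ks tdEps \<open>clone n C ks = -3\<close> by auto
        then show ?thesis
          by (simp add: ones_def T'_def sum_negf sum_divide_distrib[symmetric] field_simps)
      qed
    qed
    have decEps: "decomposable \<E> d T'" using decomp[of \<E> "-3"] tdEps unfolding T'_def by simp
    have T'1: "\<forall>ks\<in>tdom \<E> d. T' ks = 1" using h4eps TEps decEps unfolding only_decomposable_def ones_def by blast
    have rep: "(\<Prod>i<d. u 0 (replicate d a ! i)) = u 0 a ^ d" for a
    proof -
      have "(\<Prod>i<d. u 0 (replicate d a ! i)) = (\<Prod>i<d. u 0 a)" by (rule prod.cong) auto
      then show ?thesis by simp
    qed
    have r1: "replicate d 1 \<in> tdom E d" using \<open>n \<ge> 1\<close> by (auto simp: tdom_def E_def)
    have r2: "replicate d (n+1) \<in> tdom \<E> d" using \<open>n \<ge> 1\<close> by (auto simp: tdom_def \<E>_def)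
    have c1: "c * u 0 1 ^ d = 1" using T1 r1 Tf[of "replicate d 1"] tdE rep by auto
    have c2: "c * u 0 (n+1) ^ d = -3" using T'1 r2 Tf[of "replicate d (n+1)"] tdEps rep
      unfolding T'_def by auto
    have p: "u 0 1 ^ d \<ge> 0" "u 0 (n+1) ^ d \<ge> 0" using \<open>even d\<close> by (auto simp: zero_le_even_power)
    show False
    proof (cases "c \<ge> 0")
      case True then have "c * u 0 (n+1) ^ d \<ge> 0" using p by simp
      then show False using c2 by simp
    next
      case False then have "c * u 0 1 ^ d \<le> 0" using p by (simp add: mult_nonpos_nonneg)
      then show False using c1 by simp
    qed
  qed
  let ?P = "\<lambda>r. \<exists>T\<in>?A. symmetric_tensor (E \<union> \<E>) d T \<and> srank_le (E \<union> \<E>) d T r"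
  have "?P (Least ?P)" using P2 by (rule LeastI)
  then have "\<not> Least ?P \<le> 1" using noP by blast
  then have "minsrk (E \<union> \<E>) d ?A \<ge> 2" unfolding minsrk_def by simp
  then show ?thesis using up by simp
qed

end
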